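(* Let $\mathcal L=(\Sigma,X)$ be a language and $\Lambda$ a basic fuzzy theory in $\mathcal L$. Let $\mathscr F_\Lambda\dashv\mathscr U_\Lambda$ be the free-model adjunction with counit $\epsilon$, let $\mathsf T_\Lambda=\mathscr U_\Lambda\circ\mathscr F_\Lambda$ be the associated monad on $\mathbf{Fuz}_H$, and let $\mathscr K:\mathbf{Mod}(\Lambda)\to\mathbf{EM}(\mathsf T_\Lambda)$ be the comparison functor, sending a model $\mathcal A$ to the Eilenberg–Moore algebra $\mathscr U_\Lambda(\epsilon_{\mathcal A}):\mathsf T_\Lambda(\mathscr U_\Lambda\mathcal A)\to\mathscr U_\Lambda\mathcal A$ and acting as the identity on underlying arrows. Then $\mathscr K$ is an isomorphism of categories. In particular $\mathbf{Mod}(\Lambda)$ and the category $\mathbf{EM}(\mathsf T_\Lambda)$ of Eilenberg–Moore algebras of $\mathsf T_\Lambda$ are isomorphic.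
   Context: $H$ is a frame with bottom $\bot$. An $H$-fuzzy set is a pair $(A,\mu_A)$ of a set $A$ and a function $\mu_A:A\to H$; an arrow $f:(A,\mu_A)\to(B,\mu_B)$ is a function with $\mu_A(x)\le\mu_B(f(x))$; they form $\mathbf{Fuz}_H$. For $n\ge1$, $(A,\mu_A)^n=(A^n,\mu)$ with $\mu(a_1,\dots,a_n)=\bigwedge_i\mu_A(a_i)$. A signature $\Sigma=(O,\mathrm{ar},C)$ consists of a set $O$ of operation symbols with arity $\mathrm{ar}:O\to\{1,2,3,\dots\}$ and a set $C$ of constant symbols. A language is a pair $\mathcal L=(\Sigma,X)$ with $X$ a set of variables. $\mathrm{Terms}(\mathcal L)$ is the smallest set containing $X\sqcup C$ and containing $f(t_1,\dots,t_{\mathrm{ar}(f)})$ whenever $f\in O$ and all $t_i\in\mathrm{Terms}(\mathcal L)$. A formula is either an equation $s\equiv t$ ($s,t$ terms) or a membership proposition $\mathsf E_l(t)$ with $l\in H$ and $t$ a term. A sequent $\Gamma\vdash\psi$ is a pair of a (possibly infinite) set $\Gamma$ of formulas and a formula $\psi$. A fuzzy theory in $\mathcal L$ is a set of sequents. A theory is basic if for every sequent $\Gamma\vdash\phi$ in it, every formula of $\Gamma$ has the form $x\equiv y$ or $\mathsf E_l(x)$ with $x,y\in X$ variables ($\phi$ arbitrary). A $\Sigma$-algebra $\mathcal A=((A,\mu_A),\Sigma^{\mathcal A})$ is an $H$-fuzzy set $(A,\mu_A)$ together with, for each $f\in O$, an arrow $f^{\mathcal A}:(A,\mu_A)^{\mathrm{ar}(f)}\to(A,\mu_A)$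 of $\mathbf{Fuz}_H$ and, for each $c\in C$, an element $c^{\mathcal A}\in A$. A morphism of $\Sigma$-algebras is an arrow of $\mathbf{Fuz}_H$ between the carriers preserving all constants and commuting with all operations. An assignment is a function $\iota:X\to A$; evaluation: $x^{\mathcal A,\iota}=\iota(x)$, $c^{\mathcal A,\iota}=c^{\mathcal A}$, $f(t_1,\dots,t_n)^{\mathcal A,\iota}=f^{\mathcal A}(t_1^{\mathcal A,\iota},\dots,t_n^{\mathcal A,\iota})$. $\mathcal A\vDash_\iota s\equiv t$ iff $s^{\mathcal A,\iota}=t^{\mathcal A,\iota}$; $\mathcal A\vDash_\iota\mathsf E_l(t)$ iff $l\le\mu_A(t^{\mathcal A,\iota})$. $\mathcal A$ satisfies $\Gamma\vdash\psi$ if for every assignment $\iota$ with $\mathcal A\vDash_\iota\phi$ for all $\phi\in\Gamma$ one has $\mathcal A\vDash_\iota\psi$. $\mathcal A$ is a model of a theory $\Lambda$ if it satisfies every sequent of $\Lambda$. $\mathbf{Mod}(\Lambda)$ is the full subcategory of the category of $\Sigma$-algebras on the models of $\Lambda$, and $\mathscr U_\Lambda:\mathbf{Mod}(\Lambda)\to\mathbf{Fuz}_H$ is the forgetful functor to carriers; it has a left adjoint $\mathscr F_\Lambda$ (free model functor). *)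

theory Defs
  imports Main
begin

class frame = complete_lattice +
  assumes frame_inf_Sup: "inf a (Sup S) = (SUP b\<in>S. inf a b)"

text \<open>An H-fuzzy set is a carrier \<open>A\<close> together with \<open>\<mu> :: 'a \<Rightarrow> 'h\<close> (values outside \<open>A\<close> irrelevant).\<close>
definition fuz_arrow :: "'a set \<Rightarrow> ('a \<Rightarrow> 'h::order) \<Rightarrow> 'b set \<Rightarrow> ('b \<Rightarrow> 'h) \<Rightarrow> ('a \<Rightarrow> 'b) \<Rightarrow> bool" where
  "fuz_arrow A \<mu> B \<nu> h \<longleftrightarrow> (\<forall>a\<in>A. h a \<in> B \<and> \<mu> a \<le> \<nu> (h a))"

datatype ('o,'c,'v) trm = V 'v | K 'c | Op 'o "('o,'c,'v) trm list"

inductive wf_trm :: "'o set \<Rightarrow> ('o \<Rightarrow> nat) \<Rightarrow> 'c set \<Rightarrow> 'v set \<Rightarrow> ('o,'c,'v) trm \<Rightarrow> bool"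
  for Ops ar C Vs where
  wf_V: "v \<in> Vs \<Longrightarrow> wf_trm Ops ar C Vs (V v)"
| wf_K: "c \<in> C \<Longrightarrow> wf_trm Ops ar C Vs (K c)"
| wf_Op: "f \<in> Ops \<Longrightarrow> length ts = ar f \<Longrightarrow> (\<forall>t\<in>set ts. wf_trm Ops ar C Vs t)
           \<Longrightarrow> wf_trm Ops ar C Vs (Op f ts)"

primrec subst :: "('v \<Rightarrow> ('o,'c,'w) trm) \<Rightarrow> ('o,'c,'v) trm \<Rightarrow> ('o,'c,'w) trm" where
  "subst \<sigma> (V v) = \<sigma> v"
| "subst \<sigma> (K c) = K c"
| "subst \<sigma> (Op f ts) = Op f (map (subst \<sigma>) ts)"

primrec eval :: "('o \<Rightarrow> 'a list \<Rightarrow> 'a) \<Rightarrow> ('c \<Rightarrow> 'a) \<Rightarrow> ('v \<Rightarrow> 'a) \<Rightarrow> ('o,'c,'v) trm \<Rightarrow> 'a" where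
  "eval ops cst \<iota> (V v) = \<iota> v"
| "eval ops cst \<iota> (K c) = cst c"
| "eval ops cst \<iota> (Op f ts) = ops f (map (eval ops cst \<iota>) ts)"

text \<open>Formulas: equations and membership propositions \<open>E_l(t)\<close>.\<close>
datatype ('o,'c,'x,'h) fml = Eqn "('o,'c,'x) trm" "('o,'c,'x) trm" | Mem 'h "('o,'c,'x) trm"

type_synonym ('o,'c,'x,'h) sequent = "('o,'c,'x,'h) fml set \<times> ('o,'c,'x,'h) fml"

fun wf_fml :: "'o set \<Rightarrow> ('o \<Rightarrow> nat) \<Rightarrow> 'c set \<Rightarrow> 'x set \<Rightarrow> ('o,'c,'x,'h) fml \<Rightarrow> bool" where
  "wf_fml Ops ar C X (Eqn s t) = (wf_trm Ops ar C X s \<and> wf_trm Ops ar C X t)"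
| "wf_fml Ops ar C X (Mem l t) = wf_trm Ops ar C X t"

definition fuzzy_theory :: "'o set \<Rightarrow> ('o \<Rightarrow> nat) \<Rightarrow> 'c set \<Rightarrow> 'x set \<Rightarrow> ('o,'c,'x,'h) sequent set \<Rightarrow> bool" where
  "fuzzy_theory Ops ar C X \<Lambda> \<longleftrightarrow>
     (\<forall>(\<Gamma>,\<psi>)\<in>\<Lambda>. (\<forall>\<phi>\<in>\<Gamma>. wf_fml Ops ar C X \<phi>) \<and> wf_fml Ops ar C X \<psi>)"

definition basic_theory :: "'x set \<Rightarrow> ('o,'c,'x,'h) sequent set \<Rightarrow> bool" where
  "basic_theory X \<Lambda> \<longleftrightarrow>
     (\<forall>(\<Gamma>,\<psi>)\<in>\<Lambda>. \<forall>\<phi>\<in>\<Gamma>.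
        (\<exists>x y. x \<in> X \<and> y \<in> X \<and> \<phi> = Eqn (V x) (V y)) \<or> (\<exists>l x. x \<in> X \<and> \<phi> = Mem l (V x)))"

text \<open>Operations/constants are taken
  extensional (\<open>undefined\<close> outside their domain), so that they are determined by their
  values on the domain.\<close>
definition is_alg :: "'o set \<Rightarrow> ('o \<Rightarrow> nat) \<Rightarrow> 'c set \<Rightarrow> 'a set \<Rightarrow> ('a \<Rightarrow> 'h::complete_lattice)
                      \<Rightarrow> ('o \<Rightarrow> 'a list \<Rightarrow> 'a) \<Rightarrow> ('c \<Rightarrow> 'a) \<Rightarrow> bool" where
  "is_alg Ops ar C A \<mu> ops cst \<longleftrightarrow>
     (\<forall>c\<in>C. cst c \<in> A) \<and>
     (\<forall>f\<in>Ops. \<forall>xs. length xs = ar f \<and> set xs \<subseteq> A \<longrightarrow>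
          ops f xs \<in> A \<and> Inf (\<mu> ` set xs) \<le> \<mu> (ops f xs)) \<and>
     (\<forall>c. c \<notin> C \<longrightarrow> cst c = undefined) \<and>
     (\<forall>f xs. \<not> (f \<in> Ops \<and> length xs = ar f \<and> set xs \<subseteq> A) \<longrightarrow> ops f xs = undefined)"

fun holds :: "('a \<Rightarrow> 'h::order) \<Rightarrow> ('o \<Rightarrow> 'a list \<Rightarrow> 'a) \<Rightarrow> ('c \<Rightarrow> 'a) \<Rightarrow> ('x \<Rightarrow> 'a)
               \<Rightarrow> ('o,'c,'x,'h) fml \<Rightarrow> bool" where
  "holds \<mu> ops cst \<iota> (Eqn s t) = (eval ops cst \<iota> s = eval ops cst \<iota> t)"
| "holds \<mu> ops cst \<iota> (Mem l t) = (l \<le> \<mu> (eval ops cst \<iota> t))"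

definition is_model :: "'o set \<Rightarrow> ('o \<Rightarrow> nat) \<Rightarrow> 'c set \<Rightarrow> 'x set \<Rightarrow> ('o,'c,'x,'h) sequent set
                        \<Rightarrow> 'a set \<Rightarrow> ('a \<Rightarrow> 'h::complete_lattice)
                        \<Rightarrow> ('o \<Rightarrow> 'a list \<Rightarrow> 'a) \<Rightarrow> ('c \<Rightarrow> 'a) \<Rightarrow> bool" where
  "is_model Ops ar C X \<Lambda> A \<mu> ops cst \<longleftrightarrow>
     is_alg Ops ar C A \<mu> ops cst \<and>
     (\<forall>(\<Gamma>,\<psi>)\<in>\<Lambda>. \<forall>\<iota>. (\<forall>x\<in>X. \<iota> x \<in> A) \<longrightarrow>
         (\<forall>\<phi>\<in>\<Gamma>. holds \<mu> ops cst \<iota> \<phi>) \<longrightarrow> holds \<mu> ops cst \<iota> \<psi>)"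

definition alg_hom :: "'o set \<Rightarrow> ('o \<Rightarrow> nat) \<Rightarrow> 'c set
     \<Rightarrow> 'a set \<Rightarrow> ('a \<Rightarrow> 'h::order) \<Rightarrow> ('o \<Rightarrow> 'a list \<Rightarrow> 'a) \<Rightarrow> ('c \<Rightarrow> 'a)
     \<Rightarrow> 'b set \<Rightarrow> ('b \<Rightarrow> 'h) \<Rightarrow> ('o \<Rightarrow> 'b list \<Rightarrow> 'b) \<Rightarrow> ('c \<Rightarrow> 'b) \<Rightarrow> ('a \<Rightarrow> 'b) \<Rightarrow> bool" where
  "alg_hom Ops ar C A \<mu> ops cst B \<nu> ops' cst' h \<longleftrightarrow>
     fuz_arrow A \<mu> B \<nu> h \<and>
     (\<forall>c\<in>C. h (cst c) = cst' c) \<and>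
     (\<forall>f\<in>Ops. \<forall>xs. length xs = ar f \<and> set xs \<subseteq> A \<longrightarrow> h (ops f xs) = ops' f (map h xs))"

text \<open>Free model on \<open>(A,\<mu>)\<close>: terms over generators \<open>A\<close>, modulo the least congruence \<open>R\<close> and with
  the least membership \<open>\<nu>\<close> such that \<open>\<mu> \<le> \<nu>\<close> on generators, operations are Fuz-arrows,
  \<open>\<nu>\<close> respects \<open>R\<close>, and all sequents of \<open>\<Lambda>\<close> hold (assignments into terms).\<close>
fun tholds :: "(('o,'c,'a) trm \<times> ('o,'c,'a) trm) set \<Rightarrow> (('o,'c,'a) trm \<Rightarrow> 'h::order)
               \<Rightarrow> ('x \<Rightarrow> ('o,'c,'a) trm) \<Rightarrow> ('o,'c,'x,'h) fml \<Rightarrow> bool" where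
  "tholds R \<nu> \<iota> (Eqn s t) = ((subst \<iota> s, subst \<iota> t) \<in> R)"
| "tholds R \<nu> \<iota> (Mem l t) = (l \<le> \<nu> (subst \<iota> t))"

definition closed_pair :: "'o set \<Rightarrow> ('o \<Rightarrow> nat) \<Rightarrow> 'c set \<Rightarrow> 'x set \<Rightarrow> ('o,'c,'x,'h) sequent set
     \<Rightarrow> 'a set \<Rightarrow> ('a \<Rightarrow> 'h::complete_lattice)
     \<Rightarrow> (('o,'c,'a) trm \<times> ('o,'c,'a) trm) set \<Rightarrow> (('o,'c,'a) trm \<Rightarrow> 'h) \<Rightarrow> bool" where
  "closed_pair Ops ar C X \<Lambda> A \<mu> R \<nu> \<longleftrightarrow>
     equiv {t. wf_trm Ops ar C A t} R \<and>
     (\<forall>f\<in>Ops. \<forall>ss ts. length ss = ar f \<and> length ts = ar f \<and>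
          (\<forall>i<ar f. (ss ! i, ts ! i) \<in> R) \<longrightarrow> (Op f ss, Op f ts) \<in> R) \<and>
     (\<forall>a\<in>A. \<mu> a \<le> \<nu> (V a)) \<and>
     (\<forall>f\<in>Ops. \<forall>ts. length ts = ar f \<and> (\<forall>t\<in>set ts. wf_trm Ops ar C A t) \<longrightarrow>
          Inf (\<nu> ` set ts) \<le> \<nu> (Op f ts)) \<and>
     (\<forall>(s,t)\<in>R. \<nu> s = \<nu> t) \<and>
     (\<forall>(\<Gamma>,\<psi>)\<in>\<Lambda>. \<forall>\<iota>. (\<forall>x\<in>X. wf_trm Ops ar C A (\<iota> x)) \<longrightarrow>
          (\<forall>\<phi>\<in>\<Gamma>. tholds R \<nu> \<iota> \<phi>) \<longrightarrow> tholds R \<nu> \<iota> \<psi>)"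

definition free_rel where
  "free_rel Ops ar C X \<Lambda> A \<mu> = \<Inter>{R. \<exists>\<nu>. closed_pair Ops ar C X \<Lambda> A \<mu> R \<nu>}"

definition free_mem where
  "free_mem Ops ar C X \<Lambda> A \<mu> t = Inf {\<nu> t | R \<nu>. closed_pair Ops ar C X \<Lambda> A \<mu> R \<nu>}"

text \<open>Carrier and membership of \<open>T_\<Lambda>(A,\<mu>) = U_\<Lambda>(F_\<Lambda>(A,\<mu>))\<close>.\<close>
definition Tcar where
  "Tcar Ops ar C X \<Lambda> A \<mu> = {t. wf_trm Ops ar C A t} // free_rel Ops ar C X \<Lambda> A \<mu>"

definition Tmem where
  "Tmem Ops ar C X \<Lambda> A \<mu> c = (SUP t\<in>c. free_mem Ops ar C X \<Lambda> A \<mu> t)"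

definition Tunit where
  "Tunit Ops ar C X \<Lambda> A \<mu> a = free_rel Ops ar C X \<Lambda> A \<mu> `` {V a}"

text \<open>\<open>T g : T(A,\<mu>) \<rightarrow> T(B,\<nu>)\<close> for a Fuz-arrow \<open>g\<close>; only the target enters the formula.\<close>
definition Tmap where
  "Tmap Ops ar C X \<Lambda> B \<nu> g c =
     free_rel Ops ar C X \<Lambda> B \<nu> `` {subst (\<lambda>a. V (g a)) (SOME t. t \<in> c)}"

definition Tmult where
  "Tmult Ops ar C X \<Lambda> A \<mu> Z =
     free_rel Ops ar C X \<Lambda> A \<mu> `` {subst (\<lambda>c. SOME t. t \<in> c) (SOME T. T \<in> Z)}"

text \<open>\<open>U_\<Lambda>(\<epsilon>_\<A>)\<close>: the counit at a model, evaluating a representative term.\<close>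
definition counit :: "('o \<Rightarrow> 'a list \<Rightarrow> 'a) \<Rightarrow> ('c \<Rightarrow> 'a) \<Rightarrow> ('o,'c,'a) trm set \<Rightarrow> 'a" where
  "counit ops cst c = eval ops cst id (SOME t. t \<in> c)"

definition is_EM where
  "is_EM Ops ar C X \<Lambda> A \<mu> \<alpha> \<longleftrightarrow>
     fuz_arrow (Tcar Ops ar C X \<Lambda> A \<mu>) (Tmem Ops ar C X \<Lambda> A \<mu>) A \<mu> \<alpha> \<and>
     (\<forall>a\<in>A. \<alpha> (Tunit Ops ar C X \<Lambda> A \<mu> a) = a) \<and>
     (\<forall>Z\<in>Tcar Ops ar C X \<Lambda> (Tcar Ops ar C X \<Lambda> A \<mu>) (Tmem Ops ar C X \<Lambda> A \<mu>).
         \<alpha> (Tmult Ops ar C X \<Lambda> A \<mu> Z) = \<alpha> (Tmap Ops ar C X \<Lambda> A \<mu> \<alpha> Z))"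

definition is_EM_hom where
  "is_EM_hom Ops ar C X \<Lambda> A \<mu> \<alpha> B \<nu> \<beta> h \<longleftrightarrow>
     fuz_arrow A \<mu> B \<nu> h \<and>
     (\<forall>c\<in>Tcar Ops ar C X \<Lambda> A \<mu>. h (\<alpha> c) = \<beta> (Tmap Ops ar C X \<Lambda> B \<nu> h c))"

end

theory Submission
  imports Defs
begin

lemma wf_V_iff[simp]: "wf_trm Ops ar C A (V v) \<longleftrightarrow> v \<in> A"
  by (auto elim: wf_trm.cases intro: wf_trm.intros)
lemma wf_K_iff[simp]: "wf_trm Ops ar C A (K c) \<longleftrightarrow> c \<in> C"
  by (auto elim: wf_trm.cases intro: wf_trm.intros)
lemma wf_Op_iff[simp]: "wf_trm Ops ar C A (Op f ts) \<longleftrightarrow> f \<in> Ops \<and> length ts = ar f \<and> (\<forall>t\<in>set ts. wf_trm Ops ar C A t)"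
  by (auto elim: wf_trm.cases intro: wf_trm.intros)

lemma wf_subst:
  assumes "wf_trm Ops ar C A t" "\<And>a. a \<in> A \<Longrightarrow> wf_trm Ops ar C B (\<sigma> a)"
  shows "wf_trm Ops ar C B (subst \<sigma> t)"
  using assms(1) by induction (auto intro: assms(2))

lemma eval_subst: "eval ops cst \<iota> (subst \<sigma> t) = eval ops cst (eval ops cst \<iota> \<circ> \<sigma>) t"
  by (induction t) (auto cong: map_cong)

lemma subst_subst: "subst \<sigma> (subst \<tau> t) = subst (subst \<sigma> \<circ> \<tau>) t"
  by (induction t) auto

lemma eval_in:
  assumes "wf_trm Ops ar C A t" "is_alg Ops ar C B \<nu> ops cst" "\<And>a. a \<in> A \<Longrightarrow> g a \<in> B"
  shows "eval ops cst g t \<in> B"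
  using assms(1)
proof induction
  case (wf_Op f ts)
  then have "set (map (eval ops cst g) ts) \<subseteq> B" by auto
  then show ?case using assms(2) wf_Op unfolding is_alg_def by auto
qed (use assms in \<open>auto simp: is_alg_def\<close>)

lemma alg_op: "is_alg Ops ar C B \<nu> ops cst \<Longrightarrow> f\<in>Ops \<Longrightarrow> length xs = ar f \<Longrightarrow> set xs \<subseteq> B \<Longrightarrow>
  ops f xs \<in> B \<and> Inf (\<nu> ` set xs) \<le> \<nu> (ops f xs)"
  unfolding is_alg_def by blast

lemma tholds_mono:
  "tholds R \<nu> \<iota> \<phi> \<Longrightarrow> R \<subseteq> R' \<Longrightarrow> (\<And>t. \<nu> t \<le> \<nu>' t) \<Longrightarrow> tholds R' \<nu>' \<iota> \<phi>"
  by (cases \<phi>) (auto intro: order_trans)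

locale fz =
  fixes Ops :: "'o set" and ar :: "'o \<Rightarrow> nat" and C :: "'c set" and X :: "'x set"
    and \<Lambda> :: "('o,'c,'x,'h::frame) sequent set"
  assumes thy: "fuzzy_theory Ops ar C X \<Lambda>"
begin

abbreviation "W A \<equiv> {t. wf_trm Ops ar C A t}"
abbreviation "CP \<equiv> closed_pair Ops ar C X \<Lambda>"
abbreviation "FR \<equiv> free_rel Ops ar C X \<Lambda>"
abbreviation "FM \<equiv> free_mem Ops ar C X \<Lambda>"

lemma thy_wf: "(\<Gamma>,\<psi>) \<in> \<Lambda> \<Longrightarrow> wf_fml Ops ar C X \<psi> \<and> (\<forall>\<phi>\<in>\<Gamma>. wf_fml Ops ar C X \<phi>)"
  using thy unfolding fuzzy_theory_def by auto

lemma wf_fml_subst: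
  assumes "wf_fml Ops ar C X \<phi>" "\<forall>x\<in>X. wf_trm Ops ar C A (\<iota> x)"
  shows "case \<phi> of Eqn s t \<Rightarrow> wf_trm Ops ar C A (subst \<iota> s) \<and> wf_trm Ops ar C A (subst \<iota> t)
     | Mem l t \<Rightarrow> wf_trm Ops ar C A (subst \<iota> t)"
  using assms by (cases \<phi>) (auto intro: wf_subst)

lemma CPD:
  assumes "CP A \<mu> R \<nu>"
  shows CP_equiv: "equiv (W A) R"
   and CP_cong: "\<And>f ss ts. f\<in>Ops \<Longrightarrow> length ss = ar f \<Longrightarrow> length ts = ar f \<Longrightarrow>
          (\<forall>i<ar f. (ss ! i, ts ! i) \<in> R) \<Longrightarrow> (Op f ss, Op f ts) \<in> R"
   and CP_gen: "\<And>a. a\<in>A \<Longrightarrow> \<mu> a \<le> \<nu> (V a)"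
   and CP_op: "\<And>f ts. f\<in>Ops \<Longrightarrow> length ts = ar f \<Longrightarrow> (\<forall>t\<in>set ts. wf_trm Ops ar C A t) \<Longrightarrow>
          Inf (\<nu> ` set ts) \<le> \<nu> (Op f ts)"
   and CP_resp: "\<And>s t. (s,t)\<in>R \<Longrightarrow> \<nu> s = \<nu> t"
   and CP_seq: "\<And>\<Gamma> \<psi> \<iota>. (\<Gamma>,\<psi>)\<in>\<Lambda> \<Longrightarrow> (\<forall>x\<in>X. wf_trm Ops ar C A (\<iota> x)) \<Longrightarrow>
          (\<forall>\<phi>\<in>\<Gamma>. tholds R \<nu> \<iota> \<phi>) \<Longrightarrow> tholds R \<nu> \<iota> \<psi>"
  using assms unfolding closed_pair_def by blast+

lemma CPI:
  assumes "equiv (W A) R"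
   and "\<And>f ss ts. f\<in>Ops \<Longrightarrow> length ss = ar f \<Longrightarrow> length ts = ar f \<Longrightarrow>
          (\<forall>i<ar f. (ss ! i, ts ! i) \<in> R) \<Longrightarrow> (Op f ss, Op f ts) \<in> R"
   and "\<And>a. a\<in>A \<Longrightarrow> \<mu> a \<le> \<nu> (V a)"
   and "\<And>f ts. f\<in>Ops \<Longrightarrow> length ts = ar f \<Longrightarrow> (\<forall>t\<in>set ts. wf_trm Ops ar C A t) \<Longrightarrow>
          Inf (\<nu> ` set ts) \<le> \<nu> (Op f ts)"
   and "\<And>s t. (s,t)\<in>R \<Longrightarrow> \<nu> s = \<nu> t"
   and "\<And>\<Gamma> \<psi> \<iota>. (\<Gamma>,\<psi>)\<in>\<Lambda> \<Longrightarrow> (\<forall>x\<in>X. wf_trm Ops ar C A (\<iota> x)) \<Longrightarrow>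
          (\<forall>\<phi>\<in>\<Gamma>. tholds R \<nu> \<iota> \<phi>) \<Longrightarrow> tholds R \<nu> \<iota> \<psi>"
  shows "CP A \<mu> R \<nu>"
  unfolding closed_pair_def using assms by blast

lemma CP_top: "CP A \<mu> (W A \<times> W A) (\<lambda>_. top)"
proof (rule CPI)
  show "equiv (W A) (W A \<times> W A)" by (rule equivI) (auto simp: refl_on_def sym_def trans_def)
  show "tholds (W A \<times> W A) (\<lambda>_. top) \<iota> \<psi>"
    if h: "(\<Gamma>,\<psi>)\<in>\<Lambda>" "\<forall>x\<in>X. wf_trm Ops ar C A (\<iota> x)" for \<Gamma> \<psi> \<iota>
    using thy_wf[OF h(1)] wf_fml_subst[where \<phi>=\<psi> and \<iota>=\<iota> and A=A] h(2) by (cases \<psi>) auto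
  show "(Op f ss, Op f ts) \<in> W A \<times> W A" if "f\<in>Ops" "length ss = ar f" "length ts = ar f"
     "\<forall>i<ar f. (ss ! i, ts ! i) \<in> W A \<times> W A" for f ss ts
    using that by (auto simp: in_set_conv_nth)
qed auto

lemma CP_least:
  assumes "CP A \<mu> R \<nu>" shows "FR A \<mu> \<subseteq> R" "FM A \<mu> t \<le> \<nu> t"
  using assms unfolding free_rel_def free_mem_def by (auto intro!: Inf_lower)

lemma CP_free: "CP A \<mu> (FR A \<mu>) (FM A \<mu>)"
proof (rule CPI)
  let ?S = "{R. \<exists>\<nu>. CP A \<mu> R \<nu>}"
  have ne: "W A \<times> W A \<in> ?S" using CP_top by blast
  have FR: "FR A \<mu> = \<Inter>?S" unfolding free_rel_def ..
  have FMd: "FM A \<mu> t = Inf {\<nu> t | R \<nu>. CP A \<mu> R \<nu>}" for t unfolding free_mem_def ..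
  show "equiv (W A) (FR A \<mu>)" unfolding FR
  proof (rule equivI)
    show "\<Inter>?S \<subseteq> W A \<times> W A" using ne by blast
    show "refl_on (W A) (\<Inter>?S)" unfolding refl_on_def
    proof (intro ballI InterI)
      fix x R assume x: "x \<in> W A" and "R \<in> ?S"
      then obtain \<nu> where "CP A \<mu> R \<nu>" by blast
      from CP_equiv[OF this] x show "(x,x) \<in> R" unfolding equiv_def refl_on_def by blast
    qed
    show "sym (\<Inter>?S)" unfolding sym_def
    proof (intro allI impI InterI)
      fix x y R assume xy: "(x,y) \<in> \<Inter>?S" and "R \<in> ?S"
      then obtain \<nu> where cp: "CP A \<mu> R \<nu>" by blast
      have "(x,y) \<in> R" using xy \<open>R \<in> ?S\<close> by blast
      with CP_equiv[OF cp] show "(y,x) \<in> R" unfolding equiv_def by (blast dest: symD)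
    qed
    show "trans (\<Inter>?S)" unfolding trans_def
    proof (intro allI impI InterI)
      fix x y z R assume xy: "(x,y) \<in> \<Inter>?S" and yz: "(y,z) \<in> \<Inter>?S" and "R \<in> ?S"
      then obtain \<nu> where cp: "CP A \<mu> R \<nu>" by blast
      have "(x,y) \<in> R" "(y,z) \<in> R" using xy yz \<open>R \<in> ?S\<close> by blast+
      with CP_equiv[OF cp] show "(x,z) \<in> R" unfolding equiv_def by (blast dest: transD)
    qed
  qed
  show "(Op f ss, Op f ts) \<in> FR A \<mu>" if "f\<in>Ops" "length ss = ar f" "length ts = ar f"
     "\<forall>i<ar f. (ss ! i, ts ! i) \<in> FR A \<mu>" for f ss ts
    unfolding FR
  proof (rule InterI)
    fix R assume "R \<in> ?S"
    then obtain \<nu> where cp: "CP A \<mu> R \<nu>" by blast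
    have "\<forall>i<ar f. (ss ! i, ts ! i) \<in> R" using that(4) \<open>R \<in> ?S\<close> unfolding FR by blast
    then show "(Op f ss, Op f ts) \<in> R" using CP_cong[OF cp that(1-3)] by blast
  qed
  show "\<mu> a \<le> FM A \<mu> (V a)" if "a \<in> A" for a
    unfolding FMd
  proof (rule Inf_greatest, clarify)
    fix R \<nu> assume cp: "CP A \<mu> R \<nu>" show "\<mu> a \<le> \<nu> (V a)" by (rule CP_gen[OF cp that])
  qed
  show "Inf (FM A \<mu> ` set ts) \<le> FM A \<mu> (Op f ts)"
    if h: "f\<in>Ops" "length ts = ar f" "\<forall>t\<in>set ts. wf_trm Ops ar C A t" for f ts
  proof (unfold FMd[of "Op f ts"], rule Inf_greatest, clarify)
    fix R \<nu> assume cp: "CP A \<mu> R \<nu>"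
    have "Inf (FM A \<mu> ` set ts) \<le> Inf (\<nu> ` set ts)"
      using CP_least(2)[OF cp] by (auto intro!: Inf_mono)
    also have "\<dots> \<le> \<nu> (Op f ts)" using CP_op[OF cp h] .
    finally show "Inf (FM A \<mu> ` set ts) \<le> \<nu> (Op f ts)" .
  qed
  show "FM A \<mu> s = FM A \<mu> t" if "(s,t) \<in> FR A \<mu>" for s t
  proof -
    have "{\<nu> s | R \<nu>. CP A \<mu> R \<nu>} = {\<nu> t | R \<nu>. CP A \<mu> R \<nu>}"
    proof -
      have e: "\<nu> s = \<nu> t" if cp: "CP A \<mu> R \<nu>" for R \<nu>
      proof -
        have "R \<in> ?S" using cp by blast
        then have "(s,t) \<in> R" using \<open>(s,t) \<in> FR A \<mu>\<close> unfolding FR by blast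
        then show ?thesis by (rule CP_resp[OF cp])
      qed
      show ?thesis by (auto simp: e) (metis e)+
    qed
    then show ?thesis unfolding FMd by simp
  qed
  show "tholds (FR A \<mu>) (FM A \<mu>) \<iota> \<psi>"
    if h: "(\<Gamma>,\<psi>)\<in>\<Lambda>" "\<forall>x\<in>X. wf_trm Ops ar C A (\<iota> x)"
      "\<forall>\<phi>\<in>\<Gamma>. tholds (FR A \<mu>) (FM A \<mu>) \<iota> \<phi>" for \<Gamma> \<psi> \<iota>
  proof -
    have all: "tholds R \<nu> \<iota> \<psi>" if cp: "CP A \<mu> R \<nu>" for R \<nu>
    proof -
      have "\<forall>\<phi>\<in>\<Gamma>. tholds R \<nu> \<iota> \<phi>"
        using h(3) tholds_mono CP_least[OF cp] by blast
      then show ?thesis using CP_seq[OF cp h(1,2)] by blast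
    qed
    show ?thesis
    proof (cases \<psi>)
      case (Eqn s t) then show ?thesis using all unfolding FR by auto
    next
      case (Mem l t) then show ?thesis using all unfolding FMd by (force intro!: Inf_greatest)
    qed
  qed
qed

lemma FR_equiv: "equiv (W A) (FR A \<mu>)"
  using CP_equiv[OF CP_free] .

lemma FR_refl: "wf_trm Ops ar C A t \<Longrightarrow> (t,t) \<in> FR A \<mu>"
  using FR_equiv by (auto simp: equiv_def refl_on_def)

lemma FR_wf: "(s,t) \<in> FR A \<mu> \<Longrightarrow> wf_trm Ops ar C A s \<and> wf_trm Ops ar C A t"
  using FR_equiv by (auto simp: equiv_def)

lemma FR_sym: "(s,t) \<in> FR A \<mu> \<Longrightarrow> (t,s) \<in> FR A \<mu>"
  using FR_equiv by (auto simp: equiv_def dest: symD)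

lemma FR_trans: "(s,t) \<in> FR A \<mu> \<Longrightarrow> (t,u) \<in> FR A \<mu> \<Longrightarrow> (s,u) \<in> FR A \<mu>"
  using FR_equiv by (auto simp: equiv_def dest: transD)

lemma model_alg: "is_model Ops ar C X \<Lambda> B \<nu> ops cst \<Longrightarrow> is_alg Ops ar C B \<nu> ops cst"
  unfolding is_model_def by blast

lemma model_seq: "is_model Ops ar C X \<Lambda> B \<nu> ops cst \<Longrightarrow> (\<Gamma>,\<psi>) \<in> \<Lambda> \<Longrightarrow> (\<forall>x\<in>X. \<iota> x \<in> B) \<Longrightarrow>
   (\<forall>\<phi>\<in>\<Gamma>. holds \<nu> ops cst \<iota> \<phi>) \<Longrightarrow> holds \<nu> ops cst \<iota> \<psi>"
  unfolding is_model_def by blast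

lemma tholds_eval:
  assumes "wf_fml Ops ar C X \<phi>" "\<forall>x\<in>X. wf_trm Ops ar C A (\<iota> x)"
  shows "tholds {(s,t). wf_trm Ops ar C A s \<and> wf_trm Ops ar C A t \<and> eval ops cst g s = eval ops cst g t}
           (\<lambda>t. \<nu> (eval ops cst g t)) \<iota> \<phi> \<longleftrightarrow> holds \<nu> ops cst (eval ops cst g \<circ> \<iota>) \<phi>"
  using assms by (cases \<phi>) (auto simp: eval_subst intro: wf_subst)

lemma eval_pullback:
  assumes B: "is_model Ops ar C X \<Lambda> B \<nu> ops cst" and g: "\<forall>a\<in>A. g a \<in> B \<and> \<mu> a \<le> \<nu> (g a)"
  shows "CP A \<mu> {(s,t). wf_trm Ops ar C A s \<and> wf_trm Ops ar C A t \<and> eval ops cst g s = eval ops cst g t}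
           (\<lambda>t. \<nu> (eval ops cst g t))"
    (is "CP A \<mu> ?R ?\<nu>")
proof (rule CPI)
  have alg: "is_alg Ops ar C B \<nu> ops cst" using model_alg[OF B] .
  have ein: "wf_trm Ops ar C A t \<Longrightarrow> eval ops cst g t \<in> B" for t
    using eval_in[OF _ alg] g by blast
  show "equiv (W A) ?R" by (rule equivI) (auto simp: refl_on_def sym_def trans_def)
  show "(Op f ss, Op f ts) \<in> ?R" if "f\<in>Ops" "length ss = ar f" "length ts = ar f"
     "\<forall>i<ar f. (ss ! i, ts ! i) \<in> ?R" for f ss ts
  proof -
    have "map (eval ops cst g) ss = map (eval ops cst g) ts"
      using that by (intro nth_equalityI) auto
    then show ?thesis using that by (auto simp: in_set_conv_nth)
  qed
  show "\<mu> a \<le> ?\<nu> (V a)" if "a \<in> A" for a using g that by simp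
  show "Inf (?\<nu> ` set ts) \<le> ?\<nu> (Op f ts)"
    if h: "f\<in>Ops" "length ts = ar f" "\<forall>t\<in>set ts. wf_trm Ops ar C A t" for f ts
  proof -
    have "set (map (eval ops cst g) ts) \<subseteq> B" using h ein by auto
    then have "Inf (\<nu> ` set (map (eval ops cst g) ts)) \<le> \<nu> (ops f (map (eval ops cst g) ts))"
      using alg_op[OF alg h(1), of "map (eval ops cst g) ts"] h(2) by simp
    then show ?thesis by (simp add: image_image)
  qed
  show "?\<nu> s = ?\<nu> t" if "(s,t) \<in> ?R" for s t using that by simp
  show "tholds ?R ?\<nu> \<iota> \<psi>"
    if h: "(\<Gamma>,\<psi>)\<in>\<Lambda>" "\<forall>x\<in>X. wf_trm Ops ar C A (\<iota> x)"
      "\<forall>\<phi>\<in>\<Gamma>. tholds ?R ?\<nu> \<iota> \<phi>" for \<Gamma> \<psi> \<iota>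
  proof -
    have "\<forall>\<phi>\<in>\<Gamma>. holds \<nu> ops cst (eval ops cst g \<circ> \<iota>) \<phi>"
      using h(3) tholds_eval[OF _ h(2)] thy_wf[OF h(1)] by blast
    moreover have "\<forall>x\<in>X. (eval ops cst g \<circ> \<iota>) x \<in> B" using h(2) ein by auto
    ultimately have "holds \<nu> ops cst (eval ops cst g \<circ> \<iota>) \<psi>"
      using model_seq[OF B h(1)] by blast
    then show ?thesis using tholds_eval[OF _ h(2)] thy_wf[OF h(1)] by blast
  qed
qed

lemma eval_resp:
  assumes "is_model Ops ar C X \<Lambda> B \<nu> ops cst" "\<forall>a\<in>A. g a \<in> B \<and> \<mu> a \<le> \<nu> (g a)"
    "(s,t) \<in> FR A \<mu>"
  shows "eval ops cst g s = eval ops cst g t"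
  using CP_least(1)[OF eval_pullback[OF assms(1,2)]] assms(3) by blast

lemma eval_mem:
  assumes "is_model Ops ar C X \<Lambda> B \<nu> ops cst" "\<forall>a\<in>A. g a \<in> B \<and> \<mu> a \<le> \<nu> (g a)"
  shows "FM A \<mu> t \<le> \<nu> (eval ops cst g t)"
  using CP_least(2)[OF eval_pullback[OF assms(1,2)]] by simp

lemma tholds_subst:
  assumes "wf_fml Ops ar C X \<phi>" "\<forall>x\<in>X. wf_trm Ops ar C A (\<iota> x)"
    "\<forall>a\<in>A. wf_trm Ops ar C B (\<sigma> a)"
  shows "tholds {(S,T). wf_trm Ops ar C A S \<and> wf_trm Ops ar C A T \<and> (subst \<sigma> S, subst \<sigma> T) \<in> FR B \<nu>}
           (\<lambda>T. FM B \<nu> (subst \<sigma> T)) \<iota> \<phi> \<longleftrightarrow> tholds (FR B \<nu>) (FM B \<nu>) (subst \<sigma> \<circ> \<iota>) \<phi>"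
  using assms by (cases \<phi>) (auto simp: subst_subst intro: wf_subst)

lemma subst_pullback:
  assumes s: "\<forall>a\<in>A. wf_trm Ops ar C B (\<sigma> a) \<and> \<mu> a \<le> FM B \<nu> (\<sigma> a)"
  shows "CP A \<mu> {(S,T). wf_trm Ops ar C A S \<and> wf_trm Ops ar C A T \<and> (subst \<sigma> S, subst \<sigma> T) \<in> FR B \<nu>}
           (\<lambda>T. FM B \<nu> (subst \<sigma> T))"
    (is "CP A \<mu> ?R ?\<nu>")
proof (rule CPI)
  have swf: "wf_trm Ops ar C A t \<Longrightarrow> wf_trm Ops ar C B (subst \<sigma> t)" for t
    using wf_subst s by blast
  show "equiv (W A) ?R"
    by (rule equivI) (auto simp: refl_on_def sym_def trans_def intro: FR_refl swf FR_sym FR_trans)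
  show "(Op f ss, Op f ts) \<in> ?R" if "f\<in>Ops" "length ss = ar f" "length ts = ar f"
     "\<forall>i<ar f. (ss ! i, ts ! i) \<in> ?R" for f ss ts
  proof -
    have "(Op f (map (subst \<sigma>) ss), Op f (map (subst \<sigma>) ts)) \<in> FR B \<nu>"
      using that by (intro CP_cong[OF CP_free]) auto
    then show ?thesis using that by (auto simp: in_set_conv_nth)
  qed
  show "\<mu> a \<le> ?\<nu> (V a)" if "a \<in> A" for a using s that by simp
  show "Inf (?\<nu> ` set ts) \<le> ?\<nu> (Op f ts)"
    if h: "f\<in>Ops" "length ts = ar f" "\<forall>t\<in>set ts. wf_trm Ops ar C A t" for f ts
  proof -
    have "Inf (FM B \<nu> ` set (map (subst \<sigma>) ts)) \<le> FM B \<nu> (Op f (map (subst \<sigma>) ts))"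
      using h swf by (intro CP_op[OF CP_free]) auto
    then show ?thesis by (simp add: image_image)
  qed
  show "?\<nu> s = ?\<nu> t" if "(s,t) \<in> ?R" for s t using that CP_resp[OF CP_free] by auto
  show "tholds ?R ?\<nu> \<iota> \<psi>"
    if h: "(\<Gamma>,\<psi>)\<in>\<Lambda>" "\<forall>x\<in>X. wf_trm Ops ar C A (\<iota> x)"
      "\<forall>\<phi>\<in>\<Gamma>. tholds ?R ?\<nu> \<iota> \<phi>" for \<Gamma> \<psi> \<iota>
  proof -
    have sw: "\<forall>a\<in>A. wf_trm Ops ar C B (\<sigma> a)" using s by blast
    have "\<forall>\<phi>\<in>\<Gamma>. tholds (FR B \<nu>) (FM B \<nu>) (subst \<sigma> \<circ> \<iota>) \<phi>"
      using h(3) tholds_subst[OF _ h(2) sw] thy_wf[OF h(1)] by blast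
    moreover have "\<forall>x\<in>X. wf_trm Ops ar C B ((subst \<sigma> \<circ> \<iota>) x)" using h(2) swf by auto
    ultimately have "tholds (FR B \<nu>) (FM B \<nu>) (subst \<sigma> \<circ> \<iota>) \<psi>"
      using CP_seq[OF CP_free h(1)] by blast
    then show ?thesis using tholds_subst[OF _ h(2) sw] thy_wf[OF h(1)] by blast
  qed
qed

lemma subst_resp:
  assumes "\<forall>a\<in>A. wf_trm Ops ar C B (\<sigma> a) \<and> \<mu> a \<le> FM B \<nu> (\<sigma> a)" "(S,T) \<in> FR A \<mu>"
  shows "(subst \<sigma> S, subst \<sigma> T) \<in> FR B \<nu>"
  using CP_least(1)[OF subst_pullback[OF assms(1)]] assms(2) by blast

lemma subst_mem:
  assumes "\<forall>a\<in>A. wf_trm Ops ar C B (\<sigma> a) \<and> \<mu> a \<le> FM B \<nu> (\<sigma> a)"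
  shows "FM A \<mu> T \<le> FM B \<nu> (subst \<sigma> T)"
  using CP_least(2)[OF subst_pullback[OF assms(1)]] by simp

abbreviation "TC \<equiv> Tcar Ops ar C X \<Lambda>"
abbreviation "TM \<equiv> Tmem Ops ar C X \<Lambda>"
abbreviation "cls A \<mu> t \<equiv> FR A \<mu> `` {t}"
definition "rep c = (SOME t. t \<in> c)"

lemma cls_in: "wf_trm Ops ar C A t \<Longrightarrow> cls A \<mu> t \<in> TC A \<mu>"
  unfolding Tcar_def by (rule quotientI) simp

lemma cls_self: "wf_trm Ops ar C A t \<Longrightarrow> t \<in> cls A \<mu> t"
  using FR_refl by blast

lemma cls_eq: "(s,t) \<in> FR A \<mu> \<Longrightarrow> cls A \<mu> s = cls A \<mu> t"
  using equiv_class_eq[OF FR_equiv] by blast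

lemma cls_eq_iff: "wf_trm Ops ar C A s \<Longrightarrow> wf_trm Ops ar C A t \<Longrightarrow> cls A \<mu> s = cls A \<mu> t \<longleftrightarrow> (s,t) \<in> FR A \<mu>"
  using eq_equiv_class_iff[OF FR_equiv] by simp

lemma TC_elem: assumes "c \<in> TC A \<mu>" "t \<in> c"
  shows "c = cls A \<mu> t" "wf_trm Ops ar C A t"
proof -
  obtain s where s: "c = cls A \<mu> s" "wf_trm Ops ar C A s" using assms(1) unfolding Tcar_def by (auto elim: quotientE)
  then have "(s,t) \<in> FR A \<mu>" using assms(2) by simp
  then show "c = cls A \<mu> t" "wf_trm Ops ar C A t" using s(1) cls_eq[of s t A \<mu>] FR_wf[of s t A \<mu>] by simp_all
qed

lemma TC_ne: "c \<in> TC A \<mu> \<Longrightarrow> \<exists>t. t \<in> c"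
proof -
  assume "c \<in> TC A \<mu>"
  then obtain x where "c = cls A \<mu> x" "wf_trm Ops ar C A x" unfolding Tcar_def by (auto elim!: quotientE)
  then show ?thesis using cls_self by blast
qed

lemma rep_in: "c \<in> TC A \<mu> \<Longrightarrow> rep c \<in> c"
  unfolding rep_def using TC_ne by (metis someI_ex)

lemma rep_wf: "c \<in> TC A \<mu> \<Longrightarrow> wf_trm Ops ar C A (rep c)"
  using TC_elem(2) rep_in by blast

lemma rep_cls: "c \<in> TC A \<mu> \<Longrightarrow> c = cls A \<mu> (rep c)"
  using TC_elem(1) rep_in by blast

lemma rep_cls_rel: "wf_trm Ops ar C A t \<Longrightarrow> (t, rep (cls A \<mu> t)) \<in> FR A \<mu>"
  using rep_in[OF cls_in, of A t \<mu>] by simp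

lemma TM_cls: "wf_trm Ops ar C A t \<Longrightarrow> TM A \<mu> (cls A \<mu> t) = FM A \<mu> t"
  unfolding Tmem_def
proof (rule SUP_eq_const)
  assume t: "wf_trm Ops ar C A t"
  show "cls A \<mu> t \<noteq> {}" using FR_refl[OF t, of \<mu>] by blast
  fix i assume "i \<in> cls A \<mu> t"
  then have "(t,i) \<in> FR A \<mu>" by simp
  from CP_resp[OF CP_free this] show "FM A \<mu> i = FM A \<mu> t" by simp
qed

lemma TM_rep: "c \<in> TC A \<mu> \<Longrightarrow> TM A \<mu> c = FM A \<mu> (rep c)"
  using TM_cls rep_cls rep_wf by metis

lemma counit_cls:
  assumes "is_model Ops ar C X \<Lambda> A \<mu> ops cst" "wf_trm Ops ar C A t"
  shows "counit ops cst (cls A \<mu> t) = eval ops cst id t"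
proof -
  have r: "(t, rep (cls A \<mu> t)) \<in> FR A \<mu>" using rep_cls_rel[OF assms(2)] .
  have idm: "\<forall>a\<in>A. id a \<in> A \<and> \<mu> a \<le> \<mu> (id a)" by simp
  show ?thesis unfolding counit_def rep_def[symmetric]
    using eval_resp[OF assms(1) idm r] by (simp add: id_def)
qed

lemma counit_Tmap:
  assumes A: "is_model Ops ar C X \<Lambda> A \<mu> ops cst" and B: "is_model Ops ar C X \<Lambda> B \<nu> ops' cst'"
    and h: "fuz_arrow A \<mu> B \<nu> h" and c: "c \<in> TC A \<mu>"
  shows "counit ops' cst' (Tmap Ops ar C X \<Lambda> B \<nu> h c) = eval ops' cst' h (rep c)"
proof -
  have hB: "\<forall>a\<in>A. wf_trm Ops ar C B (V (h a))" using h by (auto simp: fuz_arrow_def)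
  have "Tmap Ops ar C X \<Lambda> B \<nu> h c = cls B \<nu> (subst (\<lambda>a. V (h a)) (rep c))"
    unfolding Tmap_def rep_def ..
  moreover have "wf_trm Ops ar C B (subst (\<lambda>a. V (h a)) (rep c))"
    by (rule wf_subst[OF rep_wf[OF c]]) (use hB in auto)
  ultimately have "counit ops' cst' (Tmap Ops ar C X \<Lambda> B \<nu> h c) = eval ops' cst' id (subst (\<lambda>a. V (h a)) (rep c))"
    using counit_cls[OF B] by simp
  also have "\<dots> = eval ops' cst' h (rep c)" by (simp add: eval_subst comp_def)
  finally show ?thesis .
qed

lemma part1:
  assumes A: "is_model Ops ar C X \<Lambda> A \<mu> ops cst"
  shows "is_EM Ops ar C X \<Lambda> A \<mu> (counit ops cst)"
  unfolding is_EM_def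
proof (intro conjI ballI)
  have alg: "is_alg Ops ar C A \<mu> ops cst" using model_alg[OF A] .
  have cu: "counit ops cst c = eval ops cst id (rep c)" for c unfolding counit_def rep_def ..
  have idA: "\<forall>a\<in>A. id a \<in> A \<and> \<mu> a \<le> \<mu> (id a)" by simp
  show fa: "fuz_arrow (TC A \<mu>) (TM A \<mu>) A \<mu> (counit ops cst)"
    unfolding fuz_arrow_def
  proof
    fix c assume c: "c \<in> TC A \<mu>"
    show "counit ops cst c \<in> A \<and> TM A \<mu> c \<le> \<mu> (counit ops cst c)"
      unfolding cu TM_rep[OF c] using eval_in[OF rep_wf[OF c] alg] eval_mem[OF A idA] by (simp add: id_def)
  qed
  show "counit ops cst (Tunit Ops ar C X \<Lambda> A \<mu> a) = a" if "a \<in> A" for a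
    unfolding Tunit_def using counit_cls[OF A] that by simp
  fix Z assume Z: "Z \<in> TC (TC A \<mu>) (TM A \<mu>)"
  have T0: "wf_trm Ops ar C (TC A \<mu>) (rep Z)" using rep_wf[OF Z] .
  have "Tmult Ops ar C X \<Lambda> A \<mu> Z = cls A \<mu> (subst rep (rep Z))"
    unfolding Tmult_def rep_def[abs_def] ..
  moreover have "wf_trm Ops ar C A (subst rep (rep Z))"
    using wf_subst[OF T0] rep_wf by blast
  ultimately have "counit ops cst (Tmult Ops ar C X \<Lambda> A \<mu> Z) = eval ops cst (counit ops cst) (rep Z)"
    using counit_cls[OF A] by (simp add: eval_subst cu comp_def counit_def[abs_def] rep_def)
  moreover have "counit ops cst (Tmap Ops ar C X \<Lambda> A \<mu> (counit ops cst) Z) = eval ops cst (counit ops cst) (rep Z)"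
  proof -
    have "Tmap Ops ar C X \<Lambda> A \<mu> (counit ops cst) Z = cls A \<mu> (subst (\<lambda>a. V (counit ops cst a)) (rep Z))"
      unfolding Tmap_def rep_def ..
    moreover have "wf_trm Ops ar C A (subst (\<lambda>a. V (counit ops cst a)) (rep Z))"
      by (rule wf_subst[OF T0]) (use fa in \<open>auto simp: fuz_arrow_def\<close>)
    ultimately show ?thesis using counit_cls[OF A] by (simp add: eval_subst comp_def)
  qed
  ultimately show "counit ops cst (Tmult Ops ar C X \<Lambda> A \<mu> Z) =
         counit ops cst (Tmap Ops ar C X \<Lambda> A \<mu> (counit ops cst) Z)" by simp
qed

lemma hom_eval:
  assumes alg: "is_alg Ops ar C A \<mu> ops cst" and h: "alg_hom Ops ar C A \<mu> ops cst B \<nu> ops' cst' h"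
    and t: "wf_trm Ops ar C A t"
  shows "h (eval ops cst id t) = eval ops' cst' h t"
  using t
proof induction
  case (wf_K c) then show ?case using h by (simp add: alg_hom_def)
next
  case (wf_Op f ts)
  have "set (map (eval ops cst id) ts) \<subseteq> A" using wf_Op eval_in[OF _ alg, of A _ id] by auto
  then have "h (ops f (map (eval ops cst id) ts)) = ops' f (map h (map (eval ops cst id) ts))"
    using h wf_Op(1,2) unfolding alg_hom_def by simp
  also have "map h (map (eval ops cst id) ts) = map (eval ops' cst' h) ts"
    using wf_Op(3) by (simp add: id_def)
  finally show ?case by simp
qed simp

lemma part2:
  assumes A: "is_model Ops ar C X \<Lambda> A \<mu> ops cst" and B: "is_model Ops ar C X \<Lambda> B \<nu> ops' cst'"
  shows "alg_hom Ops ar C A \<mu> ops cst B \<nu> ops' cst' h \<longleftrightarrow>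
         is_EM_hom Ops ar C X \<Lambda> A \<mu> (counit ops cst) B \<nu> (counit ops' cst') h"
proof
  have cu: "counit ops cst c = eval ops cst id (rep c)" for c unfolding counit_def rep_def ..
  assume h: "alg_hom Ops ar C A \<mu> ops cst B \<nu> ops' cst' h"
  have fa: "fuz_arrow A \<mu> B \<nu> h" using h by (simp add: alg_hom_def)
  show "is_EM_hom Ops ar C X \<Lambda> A \<mu> (counit ops cst) B \<nu> (counit ops' cst') h"
    unfolding is_EM_hom_def
  proof (intro conjI ballI fa)
    fix c assume c: "c \<in> TC A \<mu>"
    show "h (counit ops cst c) = counit ops' cst' (Tmap Ops ar C X \<Lambda> B \<nu> h c)"
      unfolding counit_Tmap[OF A B fa c] cu using hom_eval[OF model_alg[OF A] h rep_wf[OF c]] .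
  qed
next
  assume h: "is_EM_hom Ops ar C X \<Lambda> A \<mu> (counit ops cst) B \<nu> (counit ops' cst') h"
  have fa: "fuz_arrow A \<mu> B \<nu> h" using h by (simp add: is_EM_hom_def)
  have hg: "\<forall>a\<in>A. h a \<in> B \<and> \<mu> a \<le> \<nu> (h a)" using fa by (simp add: fuz_arrow_def)
  have key: "h (eval ops cst id t) = eval ops' cst' h t" if t: "wf_trm Ops ar C A t" for t
  proof -
    have c: "cls A \<mu> t \<in> TC A \<mu>" using cls_in[OF t] .
    have "h (eval ops cst id t) = h (counit ops cst (cls A \<mu> t))" using counit_cls[OF A t] by simp
    also have "\<dots> = counit ops' cst' (Tmap Ops ar C X \<Lambda> B \<nu> h (cls A \<mu> t))"
      using h c unfolding is_EM_hom_def by blast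
    also have "\<dots> = eval ops' cst' h (rep (cls A \<mu> t))" using counit_Tmap[OF A B fa c] .
    also have "\<dots> = eval ops' cst' h t"
      using eval_resp[OF B hg rep_cls_rel[OF t]] by simp
    finally show ?thesis .
  qed
  show "alg_hom Ops ar C A \<mu> ops cst B \<nu> ops' cst' h"
    unfolding alg_hom_def
  proof (intro conjI ballI allI impI fa)
    fix c assume "c \<in> C" then show "h (cst c) = cst' c" using key[of "K c"] by simp
  next
    fix f xs assume f: "f \<in> Ops" and xs: "length xs = ar f \<and> set xs \<subseteq> A"
    have "wf_trm Ops ar C A (Op f (map V xs))" using f xs by auto
    from key[OF this] show "h (ops f xs) = ops' f (map h xs)" by (simp add: comp_def)
  qed
qed

definition "opsA A \<mu> \<alpha> f xs = (if f\<in>Ops \<and> length xs = ar f \<and> set xs \<subseteq> A then \<alpha> (cls A \<mu> (Op f (map V xs))) else undefined)"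
definition "cstA A \<mu> \<alpha> c = (if c\<in>C then \<alpha> (cls A \<mu> (K c)) else undefined)"

lemma EM_fa: "is_EM Ops ar C X \<Lambda> A \<mu> \<alpha> \<Longrightarrow> c \<in> TC A \<mu> \<Longrightarrow> \<alpha> c \<in> A \<and> TM A \<mu> c \<le> \<mu> (\<alpha> c)"
  unfolding is_EM_def fuz_arrow_def by blast

lemma alpha_eval:
  assumes EM: "is_EM Ops ar C X \<Lambda> A \<mu> \<alpha>" and t: "wf_trm Ops ar C A t"
  shows "\<alpha> (cls A \<mu> t) = eval (opsA A \<mu> \<alpha>) (cstA A \<mu> \<alpha>) id t"
  using t
proof induction
  case (wf_V v)
  then show ?case using EM unfolding is_EM_def Tunit_def by simp
next
  case (wf_K c)
  then show ?case by (simp add: cstA_def)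
next
  case (wf_Op f ts)
  let ?ev = "eval (opsA A \<mu> \<alpha>) (cstA A \<mu> \<alpha>) id"
  let ?T1 = "Op f (map (\<lambda>t. V (cls A \<mu> t)) ts)"
  have T1: "wf_trm Ops ar C (TC A \<mu>) ?T1" using wf_Op by (auto intro: cls_in)
  let ?Z = "cls (TC A \<mu>) (TM A \<mu>) ?T1"
  have Z: "?Z \<in> TC (TC A \<mu>) (TM A \<mu>)" using cls_in[OF T1] .
  have rel: "(?T1, rep ?Z) \<in> FR (TC A \<mu>) (TM A \<mu>)" using rep_cls_rel[OF T1] .
  have s1: "\<forall>c\<in>TC A \<mu>. wf_trm Ops ar C A (rep c) \<and> TM A \<mu> c \<le> FM A \<mu> (rep c)"
    by (simp add: rep_wf TM_rep)
  have r1: "(subst rep ?T1, subst rep (rep ?Z)) \<in> FR A \<mu>" using subst_resp[OF s1 rel] .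
  have r1': "(Op f ts, subst rep ?T1) \<in> FR A \<mu>"
  proof -
    have "\<forall>i<ar f. (ts ! i, rep (cls A \<mu> (ts ! i))) \<in> FR A \<mu>"
    proof (intro allI impI)
      fix i assume "i < ar f"
      then have "ts ! i \<in> set ts" using wf_Op(2) by simp
      then have "wf_trm Ops ar C A (ts ! i)" using wf_Op(3) by blast
      then show "(ts ! i, rep (cls A \<mu> (ts ! i))) \<in> FR A \<mu>" by (rule rep_cls_rel)
    qed
    then show ?thesis using wf_Op(1,2) by (auto intro!: CP_cong[OF CP_free])
  qed
  have mult: "Tmult Ops ar C X \<Lambda> A \<mu> ?Z = cls A \<mu> (Op f ts)"
  proof -
    have "Tmult Ops ar C X \<Lambda> A \<mu> ?Z = cls A \<mu> (subst rep (rep ?Z))"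
      unfolding Tmult_def rep_def[abs_def] ..
    then show ?thesis using cls_eq[OF FR_trans[OF r1' r1]] by simp
  qed
  have s2: "\<forall>c\<in>TC A \<mu>. wf_trm Ops ar C A (V (\<alpha> c)) \<and> TM A \<mu> c \<le> FM A \<mu> (V (\<alpha> c))"
    using EM_fa[OF EM] CP_gen[OF CP_free] by (meson order_trans wf_V_iff)
  have r2: "(subst (\<lambda>c. V (\<alpha> c)) ?T1, subst (\<lambda>c. V (\<alpha> c)) (rep ?Z)) \<in> FR A \<mu>"
    using subst_resp[OF s2 rel] .
  have ys: "map (\<lambda>t. \<alpha> (cls A \<mu> t)) ts = map ?ev ts" using wf_Op by (simp add: id_def)
  have sub: "subst (\<lambda>c. V (\<alpha> c)) ?T1 = Op f (map V (map ?ev ts))"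
    using ys by (simp add: comp_def)
  have tm: "Tmap Ops ar C X \<Lambda> A \<mu> \<alpha> ?Z = cls A \<mu> (subst (\<lambda>c. V (\<alpha> c)) (rep ?Z))"
    unfolding Tmap_def rep_def ..
  have map': "Tmap Ops ar C X \<Lambda> A \<mu> \<alpha> ?Z = cls A \<mu> (Op f (map V (map ?ev ts)))"
    unfolding tm cls_eq[OF FR_sym[OF r2]] sub ..
  have ysA: "set (map ?ev ts) \<subseteq> A"
  proof -
    have "\<forall>t\<in>set ts. \<alpha> (cls A \<mu> t) \<in> A" using wf_Op(3) EM_fa[OF EM cls_in] by blast
    then have "set (map (\<lambda>t. \<alpha> (cls A \<mu> t)) ts) \<subseteq> A" by auto
    then show ?thesis unfolding ys .
  qed
  have "\<alpha> (Tmult Ops ar C X \<Lambda> A \<mu> ?Z) = \<alpha> (Tmap Ops ar C X \<Lambda> A \<mu> \<alpha> ?Z)"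
    using EM Z unfolding is_EM_def by blast
  moreover have "?ev (Op f ts) = opsA A \<mu> \<alpha> f (map ?ev ts)" by (rule eval.simps(3))
  moreover have "opsA A \<mu> \<alpha> f (map ?ev ts) = \<alpha> (cls A \<mu> (Op f (map V (map ?ev ts))))"
    using wf_Op(1,2) ysA by (simp only: opsA_def[of A \<mu> \<alpha> f "map ?ev ts"] if_True length_map simp_thms)
  ultimately show ?case unfolding mult map' by (simp only: eval.simps)
qed

lemma part3_exists:
  assumes basic: "basic_theory X \<Lambda>" and EM: "is_EM Ops ar C X \<Lambda> A \<mu> \<alpha>"
  shows "is_model Ops ar C X \<Lambda> A \<mu> (opsA A \<mu> \<alpha>) (cstA A \<mu> \<alpha>)"
proof -
  let ?o = "opsA A \<mu> \<alpha>" and ?k = "cstA A \<mu> \<alpha>"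
  have alg: "is_alg Ops ar C A \<mu> ?o ?k"
    unfolding is_alg_def
  proof (intro conjI ballI allI impI)
    fix c assume "c \<in> C" then show "?k c \<in> A"
      using EM_fa[OF EM cls_in, of "K c"] by (simp add: cstA_def)
  next
    fix f xs assume f: "f \<in> Ops" and xs: "length xs = ar f \<and> set xs \<subseteq> A"
    have wt: "wf_trm Ops ar C A (Op f (map V xs))" using f xs by auto
    have o: "?o f xs = \<alpha> (cls A \<mu> (Op f (map V xs)))" using f xs by (simp add: opsA_def)
    show "?o f xs \<in> A" using o EM_fa[OF EM cls_in[OF wt]] by simp
    have "Inf (\<mu> ` set xs) \<le> Inf (FM A \<mu> ` set (map V xs))"
    proof (rule Inf_mono)
      fix b assume "b \<in> FM A \<mu> ` set (map V xs)"
      then obtain a where a: "a \<in> set xs" "b = FM A \<mu> (V a)" by auto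
      then have "a \<in> A" using xs by blast
      then have "\<mu> a \<le> b" unfolding a(2) by (rule CP_gen[OF CP_free[of A \<mu>]])
      then show "\<exists>a\<in>\<mu> ` set xs. a \<le> b" using a(1) by blast
    qed
    also have "\<dots> \<le> FM A \<mu> (Op f (map V xs))"
      using xs f by (intro CP_op[OF CP_free]) auto
    also have "\<dots> = TM A \<mu> (cls A \<mu> (Op f (map V xs)))" using TM_cls[OF wt] by simp
    also have "\<dots> \<le> \<mu> (?o f xs)" using o EM_fa[OF EM cls_in[OF wt]] by simp
    finally show "Inf (\<mu> ` set xs) \<le> \<mu> (?o f xs)" .
  qed (auto simp: opsA_def cstA_def)
  have aev: "wf_trm Ops ar C A t \<Longrightarrow> \<alpha> (cls A \<mu> t) = eval ?o ?k id t" for t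
    using alpha_eval[OF EM] .
  show ?thesis unfolding is_model_def
  proof (intro conjI alg ballI allI impI, clarify)
    fix \<Gamma> \<psi> \<iota> assume G: "(\<Gamma>,\<psi>) \<in> \<Lambda>" and \<iota>: "\<forall>x\<in>X. \<iota> x \<in> A"
      and hol: "\<forall>\<phi>\<in>\<Gamma>. holds \<mu> ?o ?k \<iota> \<phi>"
    let ?j = "\<lambda>x. V (\<iota> x)"
    have jw: "\<forall>x\<in>X. wf_trm Ops ar C A (?j x)" using \<iota> by simp
    have "\<forall>\<phi>\<in>\<Gamma>. tholds (FR A \<mu>) (FM A \<mu>) ?j \<phi>"
    proof
      fix \<phi> assume p: "\<phi> \<in> \<Gamma>"
      then have "(\<exists>x y. x \<in> X \<and> y \<in> X \<and> \<phi> = Eqn (V x) (V y)) \<or> (\<exists>l x. x \<in> X \<and> \<phi> = Mem l (V x))"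
        using basic G unfolding basic_theory_def by blast
      then show "tholds (FR A \<mu>) (FM A \<mu>) ?j \<phi>"
      proof (elim disjE exE conjE)
        fix x y assume "x \<in> X" "y \<in> X" "\<phi> = Eqn (V x) (V y)"
        then show ?thesis using hol p \<iota> FR_refl[of A "V (\<iota> x)" \<mu>] by force
      next
        fix l x assume "x \<in> X" "\<phi> = Mem l (V x)"
        then show ?thesis using hol p \<iota> CP_gen[OF CP_free, of "\<iota> x" A \<mu>]
          by (force intro: order_trans)
      qed
    qed
    then have th: "tholds (FR A \<mu>) (FM A \<mu>) ?j \<psi>" using CP_seq[OF CP_free G jw] by blast
    have ev: "eval ?o ?k id (subst ?j t) = eval ?o ?k \<iota> t" for t by (simp add: eval_subst comp_def)
    have wpsi: "wf_fml Ops ar C X \<psi>" using thy_wf[OF G] by blast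
    have ws: "wf_trm Ops ar C A (subst ?j u)" if "wf_trm Ops ar C X u" for u
      by (rule wf_subst[OF that]) (use \<iota> in auto)
    show "holds \<mu> ?o ?k \<iota> \<psi>"
    proof (cases \<psi>)
      case (Eqn s t)
      with wpsi have w: "wf_trm Ops ar C A (subst ?j s)" "wf_trm Ops ar C A (subst ?j t)"
        using ws by auto
      from th Eqn have "cls A \<mu> (subst ?j s) = cls A \<mu> (subst ?j t)" using cls_eq by simp
      then have "eval ?o ?k id (subst ?j s) = eval ?o ?k id (subst ?j t)" using aev w by metis
      then show ?thesis using Eqn ev by simp
    next
      case (Mem l t)
      with wpsi have w: "wf_trm Ops ar C A (subst ?j t)" using ws by auto
      have "l \<le> FM A \<mu> (subst ?j t)" using th Mem by simp
      also have "\<dots> = TM A \<mu> (cls A \<mu> (subst ?j t))" using TM_cls[OF w] by simp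
      also have "\<dots> \<le> \<mu> (\<alpha> (cls A \<mu> (subst ?j t)))" using EM_fa[OF EM cls_in[OF w]] by simp
      also have "\<dots> = \<mu> (eval ?o ?k \<iota> t)" using aev[OF w] ev by simp
      finally show ?thesis using Mem by simp
    qed
  qed
qed

lemma part3:
  assumes basic: "basic_theory X \<Lambda>" and EM: "is_EM Ops ar C X \<Lambda> A \<mu> \<alpha>"
  shows "\<exists>!p. is_model Ops ar C X \<Lambda> A \<mu> (fst p) (snd p) \<and>
              (\<forall>c\<in>TC A \<mu>. counit (fst p) (snd p) c = \<alpha> c)"
proof (rule ex1I[of _ "(opsA A \<mu> \<alpha>, cstA A \<mu> \<alpha>)"])
  let ?o = "opsA A \<mu> \<alpha>" and ?k = "cstA A \<mu> \<alpha>"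
  have "counit ?o ?k c = \<alpha> c" if c: "c \<in> TC A \<mu>" for c
  proof -
    have "counit ?o ?k c = eval ?o ?k id (rep c)" unfolding counit_def rep_def ..
    also have "\<dots> = \<alpha> (cls A \<mu> (rep c))" using alpha_eval[OF EM rep_wf[OF c]] by simp
    also have "\<dots> = \<alpha> c" using rep_cls[OF c] by simp
    finally show ?thesis .
  qed
  then show "is_model Ops ar C X \<Lambda> A \<mu> (fst (?o, ?k)) (snd (?o, ?k)) \<and>
      (\<forall>c\<in>TC A \<mu>. counit (fst (?o, ?k)) (snd (?o, ?k)) c = \<alpha> c)"
    using part3_exists[OF basic EM] by simp
next
  fix p assume p: "is_model Ops ar C X \<Lambda> A \<mu> (fst p) (snd p) \<and>
      (\<forall>c\<in>TC A \<mu>. counit (fst p) (snd p) c = \<alpha> c)"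
  obtain oo kk where pk: "p = (oo,kk)" by (cases p)
  have M: "is_model Ops ar C X \<Lambda> A \<mu> oo kk" and cu: "\<forall>c\<in>TC A \<mu>. counit oo kk c = \<alpha> c" using p pk by auto
  have alg: "is_alg Ops ar C A \<mu> oo kk" using model_alg[OF M] .
  have key: "\<alpha> (cls A \<mu> t) = eval oo kk id t" if "wf_trm Ops ar C A t" for t
    using cu cls_in[OF that] counit_cls[OF M that] by metis
  have "oo = opsA A \<mu> \<alpha>"
  proof (intro ext)
    fix f xs show "oo f xs = opsA A \<mu> \<alpha> f xs"
    proof (cases "f\<in>Ops \<and> length xs = ar f \<and> set xs \<subseteq> A")
      case True
      then have "wf_trm Ops ar C A (Op f (map V xs))" by auto
      from key[OF this] True show ?thesis by (simp add: opsA_def comp_def)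
    next
      case False
      then have "oo f xs = undefined" using alg unfolding is_alg_def by blast
      moreover have "opsA A \<mu> \<alpha> f xs = undefined" using False unfolding opsA_def by (rule if_not_P)
      ultimately show ?thesis by simp
    qed
  qed
  moreover have "kk = cstA A \<mu> \<alpha>"
  proof (intro ext)
    fix c show "kk c = cstA A \<mu> \<alpha> c"
    proof (cases "c \<in> C")
      case True then show ?thesis using key[of "K c"] by (simp add: cstA_def)
    next
      case False
      then have "kk c = undefined" using alg unfolding is_alg_def by blast
      moreover have "cstA A \<mu> \<alpha> c = undefined" using False unfolding cstA_def by (rule if_not_P)
      ultimately show ?thesis by simp
    qed
  qed
  ultimately show "p = (opsA A \<mu> \<alpha>, cstA A \<mu> \<alpha>)" using pk by simp
qed

end

theorem theorem43:
  fixes Ops :: "'o set" and ar :: "'o \<Rightarrow> nat" and C :: "'c set" and X :: "'x set"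
    and \<Lambda> :: "('o,'c,'x,'h::frame) sequent set"
  assumes arity: "\<forall>f\<in>Ops. 1 \<le> ar f"
    and thy: "fuzzy_theory Ops ar C X \<Lambda>"
    and basic: "basic_theory X \<Lambda>"
  shows
    "(\<forall>(A::'a set) \<mu> ops cst. is_model Ops ar C X \<Lambda> A \<mu> ops cst \<longrightarrow>
        is_EM Ops ar C X \<Lambda> A \<mu> (counit ops cst))
   \<and> (\<forall>(A::'a set) \<mu> ops cst (B::'b set) \<nu> ops' cst' h.
        is_model Ops ar C X \<Lambda> A \<mu> ops cst \<longrightarrow> is_model Ops ar C X \<Lambda> B \<nu> ops' cst' \<longrightarrow>
        (alg_hom Ops ar C A \<mu> ops cst B \<nu> ops' cst' h \<longleftrightarrow>
         is_EM_hom Ops ar C X \<Lambda> A \<mu> (counit ops cst) B \<nu> (counit ops' cst') h))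
   \<and> (\<forall>(A::'a set) \<mu> \<alpha>. is_EM Ops ar C X \<Lambda> A \<mu> \<alpha> \<longrightarrow>
        (\<exists>!p. is_model Ops ar C X \<Lambda> A \<mu> (fst p) (snd p) \<and>
              (\<forall>c\<in>Tcar Ops ar C X \<Lambda> A \<mu>. counit (fst p) (snd p) c = \<alpha> c)))"
proof -
  interpret fz Ops ar C X \<Lambda> using thy by unfold_locales
  show ?thesis using part1 part2 part3[OF basic] by blast
qed

end
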